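(* A map $F = (f,p,x)$ in $\mathfrak{G}\left[ (\mathbb{X}, \dagger) \right]_X$ is deterministic if and only if $p=0$.
   Context: Let $(\mathbb{X}, \dagger)$ be a dagger additive category (a dagger category enriched in abelian groups with additive dagger and finite biproducts satisfying $\pi_j^\dagger = \iota_j$), and fix an object $X$. A map $p: B \to B$ is $\dagger$-positive if $p = \phi^\dagger \circ \phi$ for some $\phi$. The Markov category $\mathfrak{G}\left[ (\mathbb{X}, \dagger) \right]_X$ has the objects of $\mathbb{X}$ and maps $A \to B$ the triples $(f,p,x)$ with $f: A \to B$, $p: B \to B$ $\dagger$-positive, $x: X \to B$; identities $(\mathsf{id}_A,0,0)$; composition $(g,q,y) \circ (f,p,x) = (g \circ f, q + g \circ p \circ g^\dagger, y + g \circ x)$; monoidal product $A \otimes B = A \oplus B$, $(f,p,x) \otimes (g,q,y) = \left(f \oplus g, p \oplus q, \begin{bmatrix} x \\ y \end{bmatrix}\right)$; copy $\mathsf{copy}_A = \left(\begin{bmatrix} \mathsf{id}_A \\ \mathsf{id}_A \end{bmatrix}, 0, 0\right)$ and delete $(0,0,0): A \to \mathsf{0}$. A map $F: A \to B$ in a Markov category is deterministic if $\mathsf{copy}_B \circ F = (F \otimes F) \circ \mathsf{copy}_A$. *)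

theory Defs
  imports Main
begin

text \<open>A category given by explicit data: objects, arrows, domain/codomain, identities,
  composition (comp g f = g after f), dagger, additive structure on each hom-set
  (zero, addition, negation), binary biproducts with projections/injections, and a
  zero object (the empty biproduct).\<close>

record ('o, 'm) dac =
  c_obj  :: "'o set"
  c_arr  :: "'m set"
  c_dom  :: "'m \<Rightarrow> 'o"
  c_cod  :: "'m \<Rightarrow> 'o"
  c_id   :: "'o \<Rightarrow> 'm"
  c_comp :: "'m \<Rightarrow> 'm \<Rightarrow> 'm"
  c_dag  :: "'m \<Rightarrow> 'm"
  c_zero :: "'o \<Rightarrow> 'o \<Rightarrow> 'm"
  c_add  :: "'m \<Rightarrow> 'm \<Rightarrow> 'm"
  c_neg  :: "'m \<Rightarrow> 'm"
  c_bip  :: "'o \<Rightarrow> 'o \<Rightarrow> 'o"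
  c_pr1  :: "'o \<Rightarrow> 'o \<Rightarrow> 'm"
  c_pr2  :: "'o \<Rightarrow> 'o \<Rightarrow> 'm"
  c_in1  :: "'o \<Rightarrow> 'o \<Rightarrow> 'm"
  c_in2  :: "'o \<Rightarrow> 'o \<Rightarrow> 'm"
  c_zobj :: "'o"

definition hom :: "('o, 'm) dac \<Rightarrow> 'o \<Rightarrow> 'o \<Rightarrow> 'm set" where
  "hom C A B = {f \<in> c_arr C. c_dom C f = A \<and> c_cod C f = B}"

definition is_category :: "('o, 'm) dac \<Rightarrow> bool" where
  "is_category C \<longleftrightarrow>
     (\<forall>f\<in>c_arr C. c_dom C f \<in> c_obj C \<and> c_cod C f \<in> c_obj C)
   \<and> (\<forall>A\<in>c_obj C. c_id C A \<in> hom C A A)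
   \<and> (\<forall>f\<in>c_arr C. \<forall>g\<in>c_arr C. c_cod C f = c_dom C g \<longrightarrow>
        c_comp C g f \<in> hom C (c_dom C f) (c_cod C g))
   \<and> (\<forall>f\<in>c_arr C. c_comp C f (c_id C (c_dom C f)) = f \<and> c_comp C (c_id C (c_cod C f)) f = f)
   \<and> (\<forall>f\<in>c_arr C. \<forall>g\<in>c_arr C. \<forall>h\<in>c_arr C. c_cod C f = c_dom C g \<and> c_cod C g = c_dom C h \<longrightarrow>
        c_comp C h (c_comp C g f) = c_comp C (c_comp C h g) f)"

definition is_ab_enriched :: "('o, 'm) dac \<Rightarrow> bool" where
  "is_ab_enriched C \<longleftrightarrow>
     (\<forall>A\<in>c_obj C. \<forall>B\<in>c_obj C.
        c_zero C A B \<in> hom C A B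
      \<and> (\<forall>f\<in>hom C A B. \<forall>g\<in>hom C A B. c_add C f g \<in> hom C A B)
      \<and> (\<forall>f\<in>hom C A B. c_neg C f \<in> hom C A B)
      \<and> (\<forall>f\<in>hom C A B. \<forall>g\<in>hom C A B. \<forall>h\<in>hom C A B.
            c_add C (c_add C f g) h = c_add C f (c_add C g h))
      \<and> (\<forall>f\<in>hom C A B. \<forall>g\<in>hom C A B. c_add C f g = c_add C g f)
      \<and> (\<forall>f\<in>hom C A B. c_add C (c_zero C A B) f = f)
      \<and> (\<forall>f\<in>hom C A B. c_add C (c_neg C f) f = c_zero C A B))
   \<and> (\<forall>A\<in>c_obj C. \<forall>B\<in>c_obj C. \<forall>D\<in>c_obj C.
        (\<forall>f\<in>hom C A B. \<forall>g\<in>hom C A B. \<forall>h\<in>hom C B D.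
            c_comp C h (c_add C f g) = c_add C (c_comp C h f) (c_comp C h g))
      \<and> (\<forall>h\<in>hom C A B. \<forall>f\<in>hom C B D. \<forall>g\<in>hom C B D.
            c_comp C (c_add C f g) h = c_add C (c_comp C f h) (c_comp C g h)))"

definition is_additive_dagger :: "('o, 'm) dac \<Rightarrow> bool" where
  "is_additive_dagger C \<longleftrightarrow>
     (\<forall>f\<in>c_arr C. c_dag C f \<in> hom C (c_cod C f) (c_dom C f))
   \<and> (\<forall>f\<in>c_arr C. c_dag C (c_dag C f) = f)
   \<and> (\<forall>A\<in>c_obj C. c_dag C (c_id C A) = c_id C A)
   \<and> (\<forall>f\<in>c_arr C. \<forall>g\<in>c_arr C. c_cod C f = c_dom C g \<longrightarrow>
        c_dag C (c_comp C g f) = c_comp C (c_dag C f) (c_dag C g))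
   \<and> (\<forall>A\<in>c_obj C. \<forall>B\<in>c_obj C. \<forall>f\<in>hom C A B. \<forall>g\<in>hom C A B.
        c_dag C (c_add C f g) = c_add C (c_dag C f) (c_dag C g))"

definition has_dagger_biproducts :: "('o, 'm) dac \<Rightarrow> bool" where
  "has_dagger_biproducts C \<longleftrightarrow>
     c_zobj C \<in> c_obj C
   \<and> c_id C (c_zobj C) = c_zero C (c_zobj C) (c_zobj C)
   \<and> (\<forall>A\<in>c_obj C. \<forall>B\<in>c_obj C.
        c_bip C A B \<in> c_obj C
      \<and> c_pr1 C A B \<in> hom C (c_bip C A B) A
      \<and> c_pr2 C A B \<in> hom C (c_bip C A B) B
      \<and> c_in1 C A B \<in> hom C A (c_bip C A B)
      \<and> c_in2 C A B \<in> hom C B (c_bip C A B)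
      \<and> c_comp C (c_pr1 C A B) (c_in1 C A B) = c_id C A
      \<and> c_comp C (c_pr2 C A B) (c_in2 C A B) = c_id C B
      \<and> c_comp C (c_pr1 C A B) (c_in2 C A B) = c_zero C B A
      \<and> c_comp C (c_pr2 C A B) (c_in1 C A B) = c_zero C A B
      \<and> c_add C (c_comp C (c_in1 C A B) (c_pr1 C A B)) (c_comp C (c_in2 C A B) (c_pr2 C A B))
          = c_id C (c_bip C A B)
      \<and> c_dag C (c_pr1 C A B) = c_in1 C A B
      \<and> c_dag C (c_pr2 C A B) = c_in2 C A B)"

definition dagger_additive_category :: "('o, 'm) dac \<Rightarrow> bool" where
  "dagger_additive_category C \<longleftrightarrow>
     is_category C \<and> is_ab_enriched C \<and> is_additive_dagger C \<and> has_dagger_biproducts C"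

definition dagger_positive :: "('o, 'm) dac \<Rightarrow> 'o \<Rightarrow> 'm \<Rightarrow> bool" where
  "dagger_positive C B p \<longleftrightarrow> (\<exists>\<phi>\<in>c_arr C. c_dom C \<phi> = B \<and> p = c_comp C (c_dag C \<phi>) \<phi>)"

definition tuple :: "('o, 'm) dac \<Rightarrow> 'm \<Rightarrow> 'm \<Rightarrow> 'm" where
  "tuple C a b = c_add C (c_comp C (c_in1 C (c_cod C a) (c_cod C b)) a)
                         (c_comp C (c_in2 C (c_cod C a) (c_cod C b)) b)"

definition dsum :: "('o, 'm) dac \<Rightarrow> 'm \<Rightarrow> 'm \<Rightarrow> 'm" where
  "dsum C f g = c_add C
     (c_comp C (c_in1 C (c_cod C f) (c_cod C g)) (c_comp C f (c_pr1 C (c_dom C f) (c_dom C g))))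
     (c_comp C (c_in2 C (c_cod C f) (c_cod C g)) (c_comp C g (c_pr2 C (c_dom C f) (c_dom C g))))"

text \<open>The Markov category G[(X,dagger)]_X: maps A -> B are triples (f,p,x).\<close>
definition gmap :: "('o, 'm) dac \<Rightarrow> 'o \<Rightarrow> 'o \<Rightarrow> 'o \<Rightarrow> 'm \<times> 'm \<times> 'm \<Rightarrow> bool" where
  "gmap C X A B F = (case F of (f, p, x) \<Rightarrow>
     f \<in> hom C A B \<and> p \<in> hom C B B \<and> dagger_positive C B p \<and> x \<in> hom C X B)"

definition gcomp :: "('o, 'm) dac \<Rightarrow> 'm \<times> 'm \<times> 'm \<Rightarrow> 'm \<times> 'm \<times> 'm \<Rightarrow> 'm \<times> 'm \<times> 'm" where
  "gcomp C G F = (case G of (g, q, y) \<Rightarrow> case F of (f, p, x) \<Rightarrow>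
     (c_comp C g f, c_add C q (c_comp C g (c_comp C p (c_dag C g))), c_add C y (c_comp C g x)))"

definition gtensor :: "('o, 'm) dac \<Rightarrow> 'm \<times> 'm \<times> 'm \<Rightarrow> 'm \<times> 'm \<times> 'm \<Rightarrow> 'm \<times> 'm \<times> 'm" where
  "gtensor C F G = (case F of (f, p, x) \<Rightarrow> case G of (g, q, y) \<Rightarrow>
     (dsum C f g, dsum C p q, tuple C x y))"

definition gcopy :: "('o, 'm) dac \<Rightarrow> 'o \<Rightarrow> 'o \<Rightarrow> 'm \<times> 'm \<times> 'm" where
  "gcopy C X A = (tuple C (c_id C A) (c_id C A),
                  c_zero C (c_bip C A A) (c_bip C A A), c_zero C X (c_bip C A A))"

definition gdeterministic :: "('o, 'm) dac \<Rightarrow> 'o \<Rightarrow> 'o \<Rightarrow> 'o \<Rightarrow> 'm \<times> 'm \<times> 'm \<Rightarrow> bool" where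
  "gdeterministic C X A B F \<longleftrightarrow>
     gcomp C (gcopy C X B) F = gcomp C (gtensor C F F) (gcopy C X A)"

end

theory Submission
  imports Defs
begin

locale DAC =
  fixes C :: "('o, 'm) dac"
  assumes dac: "dagger_additive_category C"
begin

abbreviation cp (infixr "\<cdot>" 70) where "g \<cdot> f \<equiv> c_comp C g f"
abbreviation ad (infixl "\<oplus>" 65) where "f \<oplus> g \<equiv> c_add C f g"
abbreviation Z where "Z \<equiv> c_zero C"
abbreviation H where "H \<equiv> hom C"

lemma cat: "is_category C" and enr: "is_ab_enriched C" and dg: "is_additive_dagger C"
  and bp: "has_dagger_biproducts C"
  using dac unfolding dagger_additive_category_def by auto

lemma hom_obj: "f \<in> H A B \<Longrightarrow> A \<in> c_obj C \<and> B \<in> c_obj C"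
  using cat unfolding is_category_def hom_def by auto

lemma comp_hom[intro]: "f \<in> H A B \<Longrightarrow> g \<in> H B D \<Longrightarrow> g \<cdot> f \<in> H A D"
  using cat unfolding is_category_def hom_def by auto

lemma assoc: "f \<in> H A B \<Longrightarrow> g \<in> H B D \<Longrightarrow> h \<in> H D E \<Longrightarrow> h \<cdot> (g \<cdot> f) = (h \<cdot> g) \<cdot> f"
  using cat unfolding is_category_def hom_def by auto

lemma id_hom[intro]: "A \<in> c_obj C \<Longrightarrow> c_id C A \<in> H A A"
  using cat unfolding is_category_def by auto

lemma idr: "f \<in> H A B \<Longrightarrow> f \<cdot> c_id C A = f"
  using cat unfolding is_category_def hom_def by auto
lemma idl: "f \<in> H A B \<Longrightarrow> c_id C B \<cdot> f = f"
  using cat unfolding is_category_def hom_def by auto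

lemma enr1: "A \<in> c_obj C \<Longrightarrow> B \<in> c_obj C \<Longrightarrow>
        c_zero C A B \<in> hom C A B
      \<and> (\<forall>f\<in>hom C A B. \<forall>g\<in>hom C A B. c_add C f g \<in> hom C A B)
      \<and> (\<forall>f\<in>hom C A B. c_neg C f \<in> hom C A B)
      \<and> (\<forall>f\<in>hom C A B. \<forall>g\<in>hom C A B. \<forall>h\<in>hom C A B.
            c_add C (c_add C f g) h = c_add C f (c_add C g h))
      \<and> (\<forall>f\<in>hom C A B. \<forall>g\<in>hom C A B. c_add C f g = c_add C g f)
      \<and> (\<forall>f\<in>hom C A B. c_add C (c_zero C A B) f = f)
      \<and> (\<forall>f\<in>hom C A B. c_add C (c_neg C f) f = c_zero C A B)"
  by (rule bspec[OF bspec[OF conjunct1[OF enr[unfolded is_ab_enriched_def]]]])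
lemma enr2: "A \<in> c_obj C \<Longrightarrow> B \<in> c_obj C \<Longrightarrow> D \<in> c_obj C \<Longrightarrow>
        (\<forall>f\<in>hom C A B. \<forall>g\<in>hom C A B. \<forall>h\<in>hom C B D.
            c_comp C h (c_add C f g) = c_add C (c_comp C h f) (c_comp C h g))
      \<and> (\<forall>h\<in>hom C A B. \<forall>f\<in>hom C B D. \<forall>g\<in>hom C B D.
            c_comp C (c_add C f g) h = c_add C (c_comp C f h) (c_comp C g h))"
  by (rule bspec[OF bspec[OF bspec[OF conjunct2[OF enr[unfolded is_ab_enriched_def]]]]])

lemma zero_hom[intro]: "A \<in> c_obj C \<Longrightarrow> B \<in> c_obj C \<Longrightarrow> Z A B \<in> H A B"
  using enr1 by simp
lemma add_hom[intro]: "f \<in> H A B \<Longrightarrow> g \<in> H A B \<Longrightarrow> f \<oplus> g \<in> H A B"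
  using enr1 hom_obj by meson
lemma neg_hom[intro]: "f \<in> H A B \<Longrightarrow> c_neg C f \<in> H A B"
  using enr1 hom_obj by meson
lemma add_assoc: "f \<in> H A B \<Longrightarrow> g \<in> H A B \<Longrightarrow> h \<in> H A B \<Longrightarrow> (f \<oplus> g) \<oplus> h = f \<oplus> (g \<oplus> h)"
  using enr1 hom_obj by meson
lemma add_comm: "f \<in> H A B \<Longrightarrow> g \<in> H A B \<Longrightarrow> f \<oplus> g = g \<oplus> f"
  using enr1 hom_obj by meson
lemma zero_add: "f \<in> H A B \<Longrightarrow> Z A B \<oplus> f = f"
  using enr1 hom_obj by meson
lemma add_zero: "f \<in> H A B \<Longrightarrow> f \<oplus> Z A B = f"
  using zero_add add_comm hom_obj zero_hom by metis
lemma neg_add: "f \<in> H A B \<Longrightarrow> c_neg C f \<oplus> f = Z A B"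
  using enr1 hom_obj by meson
lemma distl: "f \<in> H A B \<Longrightarrow> g \<in> H A B \<Longrightarrow> h \<in> H B D \<Longrightarrow> h \<cdot> (f \<oplus> g) = h \<cdot> f \<oplus> h \<cdot> g"
  using enr2 hom_obj by meson
lemma distr: "h \<in> H A B \<Longrightarrow> f \<in> H B D \<Longrightarrow> g \<in> H B D \<Longrightarrow> (f \<oplus> g) \<cdot> h = f \<cdot> h \<oplus> g \<cdot> h"
  using enr2 hom_obj by meson

lemma idem_zero: assumes "u \<in> H A B" "u = u \<oplus> u" shows "u = Z A B"
proof -
  have "Z A B = c_neg C u \<oplus> u" using neg_add assms by simp
  also have "\<dots> = c_neg C u \<oplus> (u \<oplus> u)" using assms by simp
  also have "\<dots> = (c_neg C u \<oplus> u) \<oplus> u" using add_assoc assms neg_hom by metis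
  also have "\<dots> = u" using neg_add zero_add assms by simp
  finally show ?thesis by simp
qed

lemma comp_zero: assumes "h \<in> H B D" "A \<in> c_obj C" shows "h \<cdot> Z A B = Z A D"
proof -
  have B: "B \<in> c_obj C" "D \<in> c_obj C" using hom_obj assms by auto
  have "h \<cdot> Z A B = h \<cdot> (Z A B \<oplus> Z A B)" using zero_add zero_hom assms B by simp
  also have "\<dots> = h \<cdot> Z A B \<oplus> h \<cdot> Z A B" using distl assms B by blast
  finally show ?thesis using idem_zero comp_hom zero_hom assms B by blast
qed

lemma zero_comp: assumes "h \<in> H A B" "D \<in> c_obj C" shows "Z B D \<cdot> h = Z A D"
proof -
  have B: "B \<in> c_obj C" "A \<in> c_obj C" using hom_obj assms by auto
  have "Z B D \<cdot> h = (Z B D \<oplus> Z B D) \<cdot> h" using zero_add zero_hom assms B by simp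
  also have "\<dots> = Z B D \<cdot> h \<oplus> Z B D \<cdot> h" using distr assms B by blast
  finally show ?thesis using idem_zero comp_hom zero_hom assms B by blast
qed

lemma dag_hom[intro]: "f \<in> H A B \<Longrightarrow> c_dag C f \<in> H B A"
  using dg unfolding is_additive_dagger_def hom_def by auto
lemma dag_dag: "f \<in> H A B \<Longrightarrow> c_dag C (c_dag C f) = f"
  using dg unfolding is_additive_dagger_def hom_def by auto
lemma dag_id: "A \<in> c_obj C \<Longrightarrow> c_dag C (c_id C A) = c_id C A"
  using dg unfolding is_additive_dagger_def hom_def by auto
lemma dag_comp: "f \<in> H A B \<Longrightarrow> g \<in> H B D \<Longrightarrow> c_dag C (g \<cdot> f) = c_dag C f \<cdot> c_dag C g"
  using dg unfolding is_additive_dagger_def hom_def by auto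

lemma bip: assumes "A \<in> c_obj C" "B \<in> c_obj C"
  shows "c_bip C A B \<in> c_obj C"
      "c_pr1 C A B \<in> H (c_bip C A B) A"
      "c_pr2 C A B \<in> H (c_bip C A B) B"
      "c_in1 C A B \<in> H A (c_bip C A B)"
      "c_in2 C A B \<in> H B (c_bip C A B)"
      "c_pr1 C A B \<cdot> c_in1 C A B = c_id C A"
      "c_pr2 C A B \<cdot> c_in2 C A B = c_id C B"
      "c_pr1 C A B \<cdot> c_in2 C A B = Z B A"
      "c_pr2 C A B \<cdot> c_in1 C A B = Z A B"
      "c_comp C (c_in1 C A B) (c_pr1 C A B) \<oplus> c_comp C (c_in2 C A B) (c_pr2 C A B) = c_id C (c_bip C A B)"
      "c_dag C (c_pr1 C A B) = c_in1 C A B"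
      "c_dag C (c_pr2 C A B) = c_in2 C A B"
  using bp assms unfolding has_dagger_biproducts_def by auto


lemma hom_dc: "f \<in> H A B \<Longrightarrow> c_dom C f = A \<and> c_cod C f = B"
  unfolding hom_def by auto

lemma bip_ext: assumes u: "u \<in> H X (c_bip C A B)" and o: "A \<in> c_obj C" "B \<in> c_obj C"
  shows "u = c_in1 C A B \<cdot> (c_pr1 C A B \<cdot> u) \<oplus> c_in2 C A B \<cdot> (c_pr2 C A B \<cdot> u)"
proof -
  note b = bip[OF o]
  have "u = c_id C (c_bip C A B) \<cdot> u" using idl[OF u] by simp
  also have "\<dots> = (c_in1 C A B \<cdot> c_pr1 C A B \<oplus> c_in2 C A B \<cdot> c_pr2 C A B) \<cdot> u" using b(10) by simp
  also have "\<dots> = (c_in1 C A B \<cdot> c_pr1 C A B) \<cdot> u \<oplus> (c_in2 C A B \<cdot> c_pr2 C A B) \<cdot> u"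
    by (rule distr[OF u comp_hom[OF b(2) b(4)] comp_hom[OF b(3) b(5)]])
  also have "\<dots> = c_in1 C A B \<cdot> (c_pr1 C A B \<cdot> u) \<oplus> c_in2 C A B \<cdot> (c_pr2 C A B \<cdot> u)"
    by (simp add: assoc[OF u b(2) b(4)] assoc[OF u b(3) b(5)])
  finally show ?thesis .
qed

lemma bip_eq: assumes "u \<in> H X (c_bip C A B)" "v \<in> H X (c_bip C A B)" "A \<in> c_obj C" "B \<in> c_obj C"
  "c_pr1 C A B \<cdot> u = c_pr1 C A B \<cdot> v" "c_pr2 C A B \<cdot> u = c_pr2 C A B \<cdot> v"
  shows "u = v"
proof -
  have "u = c_in1 C A B \<cdot> (c_pr1 C A B \<cdot> u) \<oplus> c_in2 C A B \<cdot> (c_pr2 C A B \<cdot> u)"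
    by (rule bip_ext[OF assms(1,3,4)])
  also have "\<dots> = c_in1 C A B \<cdot> (c_pr1 C A B \<cdot> v) \<oplus> c_in2 C A B \<cdot> (c_pr2 C A B \<cdot> v)"
    using assms(5,6) by simp
  also have "\<dots> = v" by (rule bip_ext[OF assms(2,3,4), symmetric])
  finally show ?thesis .
qed

lemma tuple_hom: assumes a: "a \<in> H X A" and bb: "b \<in> H X B"
  shows "tuple C a b \<in> H X (c_bip C A B)"
    "c_pr1 C A B \<cdot> tuple C a b = a" "c_pr2 C A B \<cdot> tuple C a b = b"
proof -
  have o: "A \<in> c_obj C" "B \<in> c_obj C" "X \<in> c_obj C" using hom_obj assms by auto
  note b = bip[OF o(1,2)]
  have t: "tuple C a b = c_in1 C A B \<cdot> a \<oplus> c_in2 C A B \<cdot> b"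
    unfolding tuple_def using hom_dc[OF a] hom_dc[OF bb] by simp
  have m1: "c_in1 C A B \<cdot> a \<in> H X (c_bip C A B)" by (rule comp_hom[OF a b(4)])
  have m2: "c_in2 C A B \<cdot> b \<in> H X (c_bip C A B)" by (rule comp_hom[OF bb b(5)])
  show "tuple C a b \<in> H X (c_bip C A B)" unfolding t by (rule add_hom[OF m1 m2])
  have "c_pr1 C A B \<cdot> tuple C a b = c_pr1 C A B \<cdot> (c_in1 C A B \<cdot> a) \<oplus> c_pr1 C A B \<cdot> (c_in2 C A B \<cdot> b)"
    unfolding t by (rule distl[OF m1 m2 b(2)])
  also have "\<dots> = (c_pr1 C A B \<cdot> c_in1 C A B) \<cdot> a \<oplus> (c_pr1 C A B \<cdot> c_in2 C A B) \<cdot> b"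
    by (simp add: assoc[OF a b(4) b(2)] assoc[OF bb b(5) b(2)])
  also have "\<dots> = c_id C A \<cdot> a \<oplus> Z B A \<cdot> b" using b(6,8) by simp
  also have "\<dots> = a" using idl[OF a] zero_comp[OF bb o(1)] add_zero[OF a] by simp
  finally show "c_pr1 C A B \<cdot> tuple C a b = a" .
  have "c_pr2 C A B \<cdot> tuple C a b = c_pr2 C A B \<cdot> (c_in1 C A B \<cdot> a) \<oplus> c_pr2 C A B \<cdot> (c_in2 C A B \<cdot> b)"
    unfolding t by (rule distl[OF m1 m2 b(3)])
  also have "\<dots> = (c_pr2 C A B \<cdot> c_in1 C A B) \<cdot> a \<oplus> (c_pr2 C A B \<cdot> c_in2 C A B) \<cdot> b"
    by (simp add: assoc[OF a b(4) b(3)] assoc[OF bb b(5) b(3)])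
  also have "\<dots> = Z A B \<cdot> a \<oplus> c_id C B \<cdot> b" using b(7,9) by simp
  also have "\<dots> = b" using idl[OF bb] zero_comp[OF a o(2)] zero_add[OF bb] by simp
  finally show "c_pr2 C A B \<cdot> tuple C a b = b" .
qed

lemma dsum_hom: assumes f: "f \<in> H A B" and g: "g \<in> H A' B'"
  shows "dsum C f g \<in> H (c_bip C A A') (c_bip C B B')"
    "c_pr1 C B B' \<cdot> dsum C f g = f \<cdot> c_pr1 C A A'" "c_pr2 C B B' \<cdot> dsum C f g = g \<cdot> c_pr2 C A A'"
proof -
  have o: "A \<in> c_obj C" "B \<in> c_obj C" "A' \<in> c_obj C" "B' \<in> c_obj C" using hom_obj assms by auto
  note b = bip[OF o(1,3)]
  have a1: "f \<cdot> c_pr1 C A A' \<in> H (c_bip C A A') B" by (rule comp_hom[OF b(2) f])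
  have a2: "g \<cdot> c_pr2 C A A' \<in> H (c_bip C A A') B'" by (rule comp_hom[OF b(3) g])
  have t: "dsum C f g = tuple C (f \<cdot> c_pr1 C A A') (g \<cdot> c_pr2 C A A')"
    unfolding dsum_def tuple_def using hom_dc[OF f] hom_dc[OF g] hom_dc[OF a1] hom_dc[OF a2] by simp
  show "dsum C f g \<in> H (c_bip C A A') (c_bip C B B')"
       "c_pr1 C B B' \<cdot> dsum C f g = f \<cdot> c_pr1 C A A'" "c_pr2 C B B' \<cdot> dsum C f g = g \<cdot> c_pr2 C A A'"
    unfolding t using tuple_hom[OF a1 a2] by auto
qed

end

theorem mainTheorem2:
  fixes C :: "('o, 'm) dac" and X A B :: 'o and f p x :: 'm
  assumes "dagger_additive_category C"
    and "X \<in> c_obj C" and "A \<in> c_obj C" and "B \<in> c_obj C"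
    and "gmap C X A B (f, p, x)"
  shows "gdeterministic C X A B (f, p, x) \<longleftrightarrow> p = c_zero C B B"
proof -
  interpret DAC C by (rule DAC.intro) (rule assms(1))
  from assms(5) have f: "f \<in> H A B" and p: "p \<in> H B B" and x: "x \<in> H X B"
    unfolding gmap_def by auto
  note bA = bip[OF assms(3,3)] and bB = bip[OF assms(4,4)]
  define dA where "dA = tuple C (c_id C A) (c_id C A)"
  define dB where "dB = tuple C (c_id C B) (c_id C B)"
  define AA where "AA = c_bip C A A"
  define BB where "BB = c_bip C B B"
  note tA = tuple_hom[OF id_hom[OF assms(3)] id_hom[OF assms(3)], folded dA_def AA_def]
  note tB = tuple_hom[OF id_hom[OF assms(4)] id_hom[OF assms(4)], folded dB_def BB_def]
  note sf = dsum_hom[OF f f, folded AA_def BB_def]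
  note sp = dsum_hom[OF p p, folded AA_def BB_def]
  note tx = tuple_hom[OF x x, folded BB_def]
  note bA' = bA[folded AA_def] and bB' = bB[folded AA_def BB_def]
  have oAA: "AA \<in> c_obj C" and oBB: "BB \<in> c_obj C" using bA' bB' by auto
  have dagdB: "c_dag C dB \<in> H BB B" using dag_hom[OF tB(1)] .
  have dagsf: "c_dag C (dsum C f f) \<in> H BB AA" using dag_hom[OF sf(1)] .
  have gl: "gcomp C (gcopy C X B) (f, p, x) =
     (dB \<cdot> f, Z BB BB \<oplus> dB \<cdot> (p \<cdot> c_dag C dB), Z X BB \<oplus> dB \<cdot> x)"
    unfolding gcomp_def gcopy_def dB_def BB_def by simp
  have gr: "gcomp C (gtensor C (f, p, x) (f, p, x)) (gcopy C X A) =
     (dsum C f f \<cdot> dA, dsum C p p \<oplus> dsum C f f \<cdot> (Z AA AA \<cdot> c_dag C (dsum C f f)),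
      tuple C x x \<oplus> dsum C f f \<cdot> Z X AA)"
    unfolding gcomp_def gcopy_def gtensor_def dA_def AA_def by simp
  have c1: "dB \<cdot> f = dsum C f f \<cdot> dA"
  proof (rule bip_eq[OF _ _ assms(4,4), folded BB_def])
    show "dB \<cdot> f \<in> H A BB" by (rule comp_hom[OF f tB(1)])
    show "dsum C f f \<cdot> dA \<in> H A BB" by (rule comp_hom[OF tA(1) sf(1)])
    have "c_pr1 C B B \<cdot> (dB \<cdot> f) = f" by (simp add: assoc[OF f tB(1) bB'(2)] tB(2) idl[OF f])
    moreover have "c_pr1 C B B \<cdot> (dsum C f f \<cdot> dA) = f"
      by (simp add: assoc[OF tA(1) sf(1) bB'(2)] sf(2) assoc[OF tA(1) bA'(2) f, symmetric] tA(2) idr[OF f])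
    ultimately show "c_pr1 C B B \<cdot> (dB \<cdot> f) = c_pr1 C B B \<cdot> (dsum C f f \<cdot> dA)" by simp
    have "c_pr2 C B B \<cdot> (dB \<cdot> f) = f" by (simp add: assoc[OF f tB(1) bB'(3)] tB(3) idl[OF f])
    moreover have "c_pr2 C B B \<cdot> (dsum C f f \<cdot> dA) = f"
      by (simp add: assoc[OF tA(1) sf(1) bB'(3)] sf(3) assoc[OF tA(1) bA'(3) f, symmetric] tA(3) idr[OF f])
    ultimately show "c_pr2 C B B \<cdot> (dB \<cdot> f) = c_pr2 C B B \<cdot> (dsum C f f \<cdot> dA)" by simp
  qed
  have c3: "Z X BB \<oplus> dB \<cdot> x = tuple C x x \<oplus> dsum C f f \<cdot> Z X AA"
  proof -
    have "dB \<cdot> x = tuple C x x"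
    proof (rule bip_eq[OF _ _ assms(4,4), folded BB_def])
      show "dB \<cdot> x \<in> H X BB" by (rule comp_hom[OF x tB(1)])
      show "tuple C x x \<in> H X BB" by (rule tx(1))
      show "c_pr1 C B B \<cdot> (dB \<cdot> x) = c_pr1 C B B \<cdot> tuple C x x"
        by (simp add: assoc[OF x tB(1) bB'(2)] tB(2) idl[OF x] tx(2))
      show "c_pr2 C B B \<cdot> (dB \<cdot> x) = c_pr2 C B B \<cdot> tuple C x x"
        by (simp add: assoc[OF x tB(1) bB'(3)] tB(3) idl[OF x] tx(3))
    qed
    moreover have "dsum C f f \<cdot> Z X AA = Z X BB" using comp_zero[OF sf(1) assms(2)] .
    ultimately show ?thesis using zero_add[OF tx(1)] add_zero[OF tx(1)] by simp
  qed
  have zdB: "c_dag C dB \<cdot> c_in2 C B B = c_id C B"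
  proof -
    have "c_dag C dB \<cdot> c_in2 C B B = c_dag C dB \<cdot> c_dag C (c_pr2 C B B)" using bB by simp
    also have "\<dots> = c_dag C (c_pr2 C B B \<cdot> dB)" using dag_comp[OF tB(1) bB'(3)] by simp
    also have "\<dots> = c_id C B" using tB dag_id assms(4) by simp
    finally show ?thesis .
  qed
  have det: "gdeterministic C X A B (f, p, x) \<longleftrightarrow>
      Z BB BB \<oplus> dB \<cdot> (p \<cdot> c_dag C dB) = dsum C p p \<oplus> dsum C f f \<cdot> (Z AA AA \<cdot> c_dag C (dsum C f f))"
    unfolding gdeterministic_def gl gr using c1 c3 by simp
  have r1: "Z BB BB \<oplus> dB \<cdot> (p \<cdot> c_dag C dB) = dB \<cdot> (p \<cdot> c_dag C dB)"
    using zero_add[OF comp_hom[OF comp_hom[OF dagdB p] tB(1)]] .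
  have r2: "dsum C p p \<oplus> dsum C f f \<cdot> (Z AA AA \<cdot> c_dag C (dsum C f f)) = dsum C p p"
  proof -
    have "Z AA AA \<cdot> c_dag C (dsum C f f) = Z BB AA" using zero_comp[OF dagsf oAA] .
    then have "dsum C f f \<cdot> (Z AA AA \<cdot> c_dag C (dsum C f f)) = Z BB BB"
      using comp_zero[OF sf(1) oBB] by simp
    then show ?thesis using add_zero sp(1) by simp
  qed
  show ?thesis
  proof
    assume "gdeterministic C X A B (f, p, x)"
    then have e: "dB \<cdot> (p \<cdot> c_dag C dB) = dsum C p p" using det r1 r2 by simp
    have "c_pr1 C B B \<cdot> (dB \<cdot> (p \<cdot> c_dag C dB)) = p \<cdot> c_dag C dB"
      using assoc[OF comp_hom[OF dagdB p] tB(1) bB'(2)] tB(2) idl[OF comp_hom[OF dagdB p]] by simp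
    then have l: "(c_pr1 C B B \<cdot> (dB \<cdot> (p \<cdot> c_dag C dB))) \<cdot> c_in2 C B B = p"
      using assoc[OF bB'(5) dagdB p] zdB idr[OF p] by simp
    have "(c_pr1 C B B \<cdot> dsum C p p) \<cdot> c_in2 C B B = (p \<cdot> c_pr1 C B B) \<cdot> c_in2 C B B"
      using sp(2) by simp
    also have "\<dots> = p \<cdot> Z B B" using assoc[OF bB'(5) bB'(2) p] bB by simp
    also have "\<dots> = Z B B" using comp_zero[OF p assms(4)] .
    finally show "p = Z B B" using l e by simp
  next
    assume pz: "p = Z B B"
    have "dB \<cdot> (p \<cdot> c_dag C dB) = Z BB BB"
      using pz zero_comp[OF dagdB assms(4)] comp_zero[OF tB(1) oBB] by simp
    moreover have "dsum C p p = Z BB BB"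
    proof (rule bip_eq[OF _ _ assms(4,4), folded BB_def, OF sp(1)])
      show "Z BB BB \<in> H BB BB" by (rule zero_hom[OF oBB oBB])
      show "c_pr1 C B B \<cdot> dsum C p p = c_pr1 C B B \<cdot> Z BB BB"
        using sp(2) pz zero_comp[OF bB'(2) assms(4)] comp_zero[OF bB'(2) oBB] by simp
      show "c_pr2 C B B \<cdot> dsum C p p = c_pr2 C B B \<cdot> Z BB BB"
        using sp(3) pz zero_comp[OF bB'(3) assms(4)] comp_zero[OF bB'(3) oBB] by simp
    qed
    ultimately show "gdeterministic C X A B (f, p, x)" using det r1 r2 by simp
  qed
qed

end
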